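(* Let $\mathcal{G}_n$ be the set of binary words of length $2n$ with $n$ zeros and $n$ ones. For integers $k,\ell\ge0$, the number of words in $\mathcal{G}_n$ with exactly $k$ occurrences of $001$ (as consecutive subword) equals $$\binom{n}{2k}\binom{2k}{k}2^{n-2k},$$ and the number of words in $\mathcal{G}_n$ with exactly $k$ occurrences of $001$ and exactly $\ell$ occurrences of $01$ (as consecutive subwords) equals $$\binom{n}{2k}\binom{2k}{k}\binom{n-2k}{\ell-k},$$ which, when $k\le\ell\le n-k$, equals $\dfrac{n!}{k!^2(\ell-k)!(n-k-\ell)!}$.
   Context: Binomial coefficients $\binom{a}{b}$ are $0$ when $b<0$ or $b>a$. *)

theory Defs
  imports Complex_Main
begin

definition G :: "nat \<Rightarrow> nat list set" where
  "G n = {w. length w = 2 * n \<and> set w \<subseteq> {0, 1} \<and> count_list w 0 = n \<and> count_list w 1 = n}"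

definition occ :: "nat list \<Rightarrow> nat list \<Rightarrow> nat" where
  "occ p w = card {i. i + length p \<le> length w \<and> take (length p) (drop i w) = p}"

definition binom :: "int \<Rightarrow> int \<Rightarrow> nat" where
  "binom a b = (if b < 0 \<or> b > a then 0 else nat a choose nat b)"

end

theory Submission
  imports Defs
begin

lemma occ_le_length: assumes "p \<noteq> []" shows "occ p w \<le> length w"
proof -
  have "{i. i + length p \<le> length w \<and> take (length p) (drop i w) = p} \<subseteq> {..<length w}"
    using assms by (cases p) auto
  then show ?thesis unfolding occ_def by (metis card_lessThan card_mono finite_lessThan)
qed

lemma occ_Cons: assumes "p \<noteq> []"
  shows "occ p (x#w) = occ p w + (if length p \<le> Suc (length w) \<and> take (length p) (x#w) = p then 1 else 0)"
proof -
  let ?S = "{j. j + length p \<le> length w \<and> take (length p) (drop j w) = p}"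
  let ?c = "length p \<le> Suc (length w) \<and> take (length p) (x#w) = p"
  have eq: "{i. i + length p \<le> length (x#w) \<and> take (length p) (drop i (x#w)) = p}
        = (if ?c then {0} else {}) \<union> Suc ` ?S"
  proof (rule set_eqI)
    fix i show "i \<in> {i. i + length p \<le> length (x#w) \<and> take (length p) (drop i (x#w)) = p}
        \<longleftrightarrow> i \<in> (if ?c then {0} else {}) \<union> Suc ` ?S"
      by (cases i) auto
  qed
  have fin: "finite ?S" by (rule finite_subset[of _ "{..length w}"]) auto
  have "card ((if ?c then {0} else {}) \<union> Suc ` ?S) = card (if ?c then {0} else ({}::nat set)) + card (Suc ` ?S)"
    by (rule card_Un_disjoint) (use fin in auto)
  also have "card (Suc ` ?S) = card ?S" by (simp add: card_image)
  finally show ?thesis unfolding occ_def eq by simp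
qed

lemma occ01_1: "occ [0,1] (1#v) = occ [0,1] v" using occ_Cons[of "[0,1]" 1 v] by simp
lemma occ001_1: "occ [0,0,1] (1#v) = occ [0,0,1] v" using occ_Cons[of "[0,0,1]" 1 v] by simp

lemma occ01_rep: "occ [0,1] (replicate x 0 @ 1 # v) = occ [0,1] v + (if 1 \<le> x then 1 else 0)"
proof (induction x)
  case 0 then show ?case using occ01_1[of v] by simp
next
  case (Suc x) then show ?case by (cases x) (simp_all add: occ_Cons)
qed

lemma occ001_rep: "occ [0,0,1] (replicate x 0 @ 1 # v) = occ [0,0,1] v + (if 2 \<le> x then 1 else 0)"
proof (induction x)
  case 0 then show ?case using occ001_1[of v] by simp
next
  case (Suc x) then show ?case
  proof (cases x)
    case 0 then show ?thesis using Suc by (simp add: occ_Cons)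
  next
    case (Suc y) then show ?thesis using Suc.IH by (cases y) (simp_all add: occ_Cons)
  qed
qed

lemma occ_no1: assumes "1 \<in> set p" "1 \<notin> set w" shows "occ p w = 0"
proof -
  have E: "{i. i + length p \<le> length w \<and> take (length p) (drop i w) = p} = {}"
  proof (rule ccontr)
    assume "\<not> ?thesis"
    then obtain i where "take (length p) (drop i w) = p" by auto
    then have "set p \<subseteq> set w" by (metis set_drop_subset set_take_subset subset_trans)
    with assms show False by auto
  qed
  show ?thesis unfolding occ_def E by simp
qed

lemma count_rep[simp]: "count_list (replicate a x) x = a" by (induction a) auto

definition W :: "nat \<Rightarrow> nat \<Rightarrow> nat list set" where
  "W a b = {w. length w = a + b \<and> set w \<subseteq> {0, 1} \<and> count_list w 0 = a \<and> count_list w 1 = b}"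

lemma finite_W: "finite (W a b)"
  by (rule finite_subset[OF _ finite_lists_length_eq[of "{0,1::nat}" "a+b"]]) (auto simp: W_def)

lemma W0: "W a 0 = {replicate a 0}"
proof (rule set_eqI, rule iffI)
  fix w assume "w \<in> W a 0"
  then have "length w = a" "set w \<subseteq> {0,1}" "1 \<notin> set w" by (auto simp: W_def count_list_0_iff)
  then have "\<forall>y\<in>set w. y = 0" by auto
  then show "w \<in> {replicate a 0}" using replicate_length_same \<open>length w = a\<close> by fastforce
qed (auto simp: W_def count_rep)

lemma rep_inj: "replicate x (0::nat) @ 1 # v = replicate y 0 @ 1 # u \<Longrightarrow> x = y \<and> v = u"
proof (induction x arbitrary: y)
  case 0 then show ?case by (cases y) auto
next
  case (Suc x) then show ?case by (cases y) auto
qed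

lemma W_Suc: "W a (Suc b) = (\<lambda>(x,v). replicate x 0 @ 1 # v) ` (SIGMA x:{..a}. W (a - x) b)"
proof (rule set_eqI, rule iffI)
  fix w assume w: "w \<in> W a (Suc b)"
  define t where "t = takeWhile (\<lambda>c. c = (0::nat)) w"
  define d where "d = dropWhile (\<lambda>c. c = (0::nat)) w"
  have wtd: "w = t @ d" unfolding t_def d_def by simp
  have t: "t = replicate (length t) 0" unfolding t_def
    by (metis (mono_tags) replicate_length_same set_takeWhileD)
  have "1 \<in> set w" using w unfolding W_def by (metis (mono_tags, lifting) count_notin mem_Collect_eq nat.distinct(1))
  moreover have "1 \<notin> set t" unfolding t_def using set_takeWhileD by fastforce
  ultimately have "1 \<in> set d" using wtd by auto
  then have dne: "d \<noteq> []" by auto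
  have "hd d \<noteq> 0" using hd_dropWhile dne unfolding d_def by blast
  moreover have "hd d \<in> set w" using dne wtd by auto
  ultimately have "hd d = 1" using w by (auto simp: W_def)
  then have d: "d = 1 # tl d" using dne by (metis list.collapse)
  have w2: "w = replicate (length t) 0 @ 1 # tl d" using wtd t d by metis
  have c0: "count_list w 0 = length t + count_list (tl d) 0" using w2 by (metis count_list_append count_rep count_list.simps(2) zero_neq_one)
  have c1: "count_list w 1 = 1 + count_list (tl d) 1" using w2 by (metis count_list_append count_notin count_list.simps(2) in_set_replicate zero_neq_one add.commute add_0)
  have "set (tl d) \<subseteq> set w" using w2 by auto
  then have "tl d \<in> W (a - length t) b \<and> length t \<le> a" using w c0 c1 w2 unfolding W_def by auto
  then show "w \<in> (\<lambda>(x,v). replicate x 0 @ 1 # v) ` (SIGMA x:{..a}. W (a - x) b)"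
    using w2 by (auto intro!: image_eqI[where x="(length t, tl d)"])
qed (auto simp: W_def)

lemma inj_rep: "inj_on (\<lambda>(x,v). replicate x (0::nat) @ 1 # v) A"
  unfolding inj_on_def by (auto dest!: rep_inj[simplified])


lemma card_W_Suc: "card {w \<in> W a (Suc b). P w} = (\<Sum>x\<le>a. card {v \<in> W (a-x) b. P (replicate x 0 @ 1 # v)})"
proof -
  let ?f = "\<lambda>(x,v). replicate x (0::nat) @ 1 # v"
  have "{w \<in> W a (Suc b). P w} = ?f ` (SIGMA x:{..a}. {v \<in> W (a-x) b. P (replicate x 0 @ 1 # v)})"
  proof -
    have "{w \<in> W a (Suc b). P w} = {w \<in> ?f ` (SIGMA x:{..a}. W (a-x) b). P w}" using W_Suc by simp
    also have "\<dots> = ?f ` (SIGMA x:{..a}. {v \<in> W (a-x) b. P (replicate x 0 @ 1 # v)})"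
    proof (rule set_eqI, rule iffI)
      fix w assume "w \<in> {w \<in> ?f ` (SIGMA x:{..a}. W (a-x) b). P w}"
      then obtain x v where "x \<le> a" "v \<in> W (a-x) b" "w = replicate x 0 @ 1 # v" "P w" by auto
      then show "w \<in> ?f ` (SIGMA x:{..a}. {v \<in> W (a-x) b. P (replicate x 0 @ 1 # v)})"
        by (intro image_eqI[where x="(x,v)"]) auto
    next
      fix w assume "w \<in> ?f ` (SIGMA x:{..a}. {v \<in> W (a-x) b. P (replicate x 0 @ 1 # v)})"
      then obtain x v where "x \<le> a" "v \<in> W (a-x) b" "w = replicate x 0 @ 1 # v" "P w" by auto
      then show "w \<in> {w \<in> ?f ` (SIGMA x:{..a}. W (a-x) b). P w}"
        by (intro CollectI conjI image_eqI[where x="(x,v)"]) auto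
    qed
    finally show ?thesis .
  qed
  then have "card {w \<in> W a (Suc b). P w} = card (SIGMA x:{..a}. {v \<in> W (a-x) b. P (replicate x 0 @ 1 # v)})"
    by (simp only: card_image[OF inj_rep])
  also have "\<dots> = (\<Sum>x\<le>a. card {v \<in> W (a-x) b. P (replicate x 0 @ 1 # v)})"
    by (rule card_SigmaI) (simp_all add: finite_W)
  finally show ?thesis .
qed

definition cf :: "nat \<Rightarrow> nat \<Rightarrow> nat \<Rightarrow> nat \<Rightarrow> nat" where
  "cf a b l k = (if l \<le> a then (b choose l) * (l choose k) * ((a - l) choose k) else 0)"

lemma hockey: "(\<Sum>y<N. if m \<le> y then (y - m) choose j else 0) = (N - m) choose Suc j"
proof (induction N)
  case 0 then show ?case by simp
next
  case (Suc N) then show ?case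
    by (cases "m \<le> N") (auto simp: Suc_diff_le)
qed

definition g :: "nat \<Rightarrow> nat \<Rightarrow> nat \<Rightarrow> nat \<Rightarrow> nat \<Rightarrow> nat" where
  "g a b l k x = (if x = 0 then cf a b l k else if x = 1 then (if 1 \<le> l then cf (a-1) b (l-1) k else 0)
     else (if 1 \<le> l \<and> 1 \<le> k then cf (a-x) b (l-1) (k-1) else 0))"

lemma arith: "(\<Sum>x\<le>a. g a b l k x) = cf a (Suc b) l k"
proof (cases a)
  case 0 then show ?thesis by (simp add: g_def cf_def)
next
  case (Suc a')
  have "(\<Sum>x\<le>a. g a b l k x) = g a b l k 0 + (\<Sum>i<Suc a'. g a b l k (Suc i))"
    unfolding Suc sum.atMost_Suc_shift lessThan_Suc_atMost ..
  also have "\<dots> = g a b l k 0 + g a b l k 1 + (\<Sum>i<a'. g a b l k (Suc (Suc i)))"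
    unfolding sum.lessThan_Suc_shift by simp
  finally have S: "(\<Sum>x\<le>a. g a b l k x) = g a b l k 0 + g a b l k 1 + (\<Sum>i<a'. g a b l k (Suc (Suc i)))" .
  show ?thesis
  proof (cases l)
    case 0 then show ?thesis unfolding S by (simp add: g_def cf_def)
  next
    case (Suc m)
    show ?thesis
    proof (cases k)
      case 0 then show ?thesis unfolding S using \<open>l = Suc m\<close> \<open>a = Suc a'\<close>
        by (simp add: g_def cf_def)
    next
      case (Suc j)
      have "(\<Sum>i<a'. g a b l k (Suc (Suc i))) = (\<Sum>i<a'. cf (a' - Suc i) b m j)"
        using \<open>l = Suc m\<close> \<open>k = Suc j\<close> \<open>a = Suc a'\<close> by (simp add: g_def)
      also have "\<dots> = (\<Sum>i<a'. cf i b m j)" by (rule sum.nat_diff_reindex)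
      also have "\<dots> = (\<Sum>i<a'. (b choose m) * (m choose j) * (if m \<le> i then (i - m) choose j else 0))"
        by (rule sum.cong) (auto simp: cf_def)
      also have "\<dots> = (b choose m) * (m choose j) * ((a' - m) choose Suc j)"
        by (simp add: sum_distrib_left[symmetric] hockey)
      finally have R: "(\<Sum>i<a'. g a b l k (Suc (Suc i))) = (b choose m) * (m choose j) * ((a' - m) choose Suc j)" .
      show ?thesis
      proof (cases "m \<le> a'")
        case True
        then show ?thesis unfolding S R using \<open>l = Suc m\<close> \<open>k = Suc j\<close> \<open>a = Suc a'\<close>
          by (simp add: g_def cf_def algebra_simps)
      next
        case False
        then show ?thesis unfolding S R using \<open>l = Suc m\<close> \<open>k = Suc j\<close> \<open>a = Suc a'\<close>
          by (simp add: g_def cf_def)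
      qed
    qed
  qed
qed

definition cnt :: "nat \<Rightarrow> nat \<Rightarrow> nat \<Rightarrow> nat \<Rightarrow> nat" where
  "cnt a b l k = card {w \<in> W a b. occ [0,1] w = l \<and> occ [0,0,1] w = k}"

lemma cnt_cf: "cnt a b l k = cf a b l k"
proof (induction b arbitrary: a l k)
  case 0
  have o1: "occ [0,Suc 0] (replicate a 0) = 0" by (rule occ_no1) auto
  have o2: "occ [0,0,Suc 0] (replicate a 0) = 0" by (rule occ_no1) auto
  have E: "{w \<in> W a 0. occ [0,1] w = l \<and> occ [0,0,1] w = k} = (if l = 0 \<and> k = 0 then {replicate a 0} else {})"
    unfolding W0 using o1 o2 by auto
  show ?case unfolding cnt_def E cf_def
    by (cases "l=0"; cases "k=0") simp_all
next
  case (Suc b)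
  have "cnt a (Suc b) l k = (\<Sum>x\<le>a. card {v \<in> W (a-x) b.
      occ [0,1] v + (if 1 \<le> x then 1 else 0) = l \<and> occ [0,0,1] v + (if 2 \<le> x then 1 else 0) = k})"
    unfolding cnt_def card_W_Suc occ01_rep occ001_rep ..
  also have "\<dots> = (\<Sum>x\<le>a. g a b l k x)"
  proof (rule sum.cong[OF refl])
    fix x assume "x \<in> {..a}"
    show "card {v \<in> W (a-x) b.
      occ [0,1] v + (if 1 \<le> x then 1 else 0) = l \<and> occ [0,0,1] v + (if 2 \<le> x then 1 else 0) = k} = g a b l k x"
    proof (cases "x = 0")
      case True then show ?thesis using Suc.IH by (simp add: g_def cnt_def)
    next
      case x0: False
      show ?thesis
      proof (cases "x = 1")
        case True then show ?thesis using Suc.IH[of "a - 1" "l - 1" k]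
          by (cases l) (auto simp: g_def cnt_def)
      next
        case False
        then have "2 \<le> x" using x0 by auto
        then show ?thesis using Suc.IH[of "a - x" "l - 1" "k - 1"] x0 False
          by (cases l; cases k) (auto simp: g_def cnt_def)
      qed
    qed
  qed
  also have "\<dots> = cf a (Suc b) l k" by (rule arith)
  finally show ?case .
qed

lemma G_W: "G n = W n n" unfolding G_def W_def by (auto simp: mult_2)

lemma ident: assumes "l \<le> n"
  shows "(n choose l) * (l choose k) * ((n - l) choose k)
       = (if k \<le> l then (n choose (2*k)) * ((2*k) choose k) * ((n - 2*k) choose (l - k)) else 0)"
proof (cases "k \<le> l")
  case False then show ?thesis by simp
next
  case kl: True
  show ?thesis
  proof (cases "2*k \<le> n")
    case False
    then have "n - l < k" using kl by linarith
    then show ?thesis using False by (simp add: binomial_eq_0)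
  next
    case k2: True
    show ?thesis
    proof (cases "l + k \<le> n")
      case False
      then have "n - l < k" using kl k2 assms by linarith
      moreover have "n - 2*k < l - k" using False kl k2 by linarith
      ultimately show ?thesis by (simp add: binomial_eq_0)
    next
      case True
      have e: "n - 2*k - (l - k) = n - l - k" using kl k2 True by linarith
      have "real ((n choose l) * (l choose k) * ((n - l) choose k))
          = fact n / (fact l * fact (n - l)) * (fact l / (fact k * fact (l - k)))
            * (fact (n - l) / (fact k * fact (n - l - k)))"
        using True kl assms by (simp add: binomial_fact)
      also have "\<dots> = fact n / (fact (2*k) * fact (n - 2*k)) * (fact (2*k) / (fact k * fact (2*k - k)))
            * (fact (n - 2*k) / (fact (l - k) * fact (n - 2*k - (l - k))))"
        unfolding e by (simp add: field_simps mult_2)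
      also have "\<dots> = real ((n choose (2*k)) * ((2*k) choose k) * ((n - 2*k) choose (l - k)))"
        using True kl k2 by (simp add: binomial_fact)
      finally show ?thesis using kl by (simp only: of_nat_eq_iff if_True)
    qed
  qed
qed

lemma cfB: "cf n n l k = (n choose (2*k)) * ((2*k) choose k) * (if k \<le> l then (n - 2*k) choose (l - k) else 0)"
proof (cases "l \<le> n")
  case True then show ?thesis unfolding cf_def using ident[OF True, of k] by simp
next
  case False
  then show ?thesis unfolding cf_def
    by (cases "2*k \<le> n") auto
qed

lemma binomB: "binom (int n) (2 * int k) * binom (2 * int k) (int k) * binom (int n - 2 * int k) (int l - int k)
   = (n choose (2*k)) * ((2*k) choose k) * (if k \<le> l then (n - 2*k) choose (l - k) else 0)"
proof (cases "2*k \<le> n")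
  case True
  have a: "nat (int n - 2 * int k) = n - 2*k" "nat (int l - int k) = l - k" "nat (2 * int k) = 2*k" by auto
  show ?thesis unfolding binom_def a using True by auto
next
  case False
  then show ?thesis unfolding binom_def by auto
qed

lemma shiftsum: "(\<Sum>l\<le>(M::nat). if k \<le> l then f (l - k) else (0::nat)) = (if k \<le> M then (\<Sum>i\<le>M-k. f i) else 0)"
proof (induction M)
  case 0 then show ?case by simp
next
  case (Suc M)
  show ?case
  proof (cases "k \<le> M")
    case True
    then show ?thesis using Suc by (simp add: Suc_diff_le)
  next
    case False
    then show ?thesis using Suc by (cases "k = Suc M") auto
  qed
qed

lemma rowsum: assumes "N \<le> M" shows "(\<Sum>i\<le>M. N choose i) = 2 ^ N"
proof -
  have "(\<Sum>i\<le>M. N choose i) = (\<Sum>i\<le>N. N choose i)"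
    by (rule sum.mono_neutral_right) (use assms in auto)
  then show ?thesis by (simp add: choose_row_sum)
qed

theorem corollary3p5:
  fixes n k l :: nat
  shows "card {w \<in> G n. occ [0,0,1] w = k}
           = binom (int n) (2 * int k) * binom (2 * int k) (int k) * 2 ^ (n - 2 * k)
       \<and> card {w \<in> G n. occ [0,0,1] w = k \<and> occ [0,1] w = l}
           = binom (int n) (2 * int k) * binom (2 * int k) (int k)
             * binom (int n - 2 * int k) (int l - int k)
       \<and> (k \<le> l \<and> l \<le> n - k \<longrightarrow>
         real (binom (int n) (2 * int k) * binom (2 * int k) (int k)
               * binom (int n - 2 * int k) (int l - int k))
           = fact n / (fact k ^ 2 * fact (l - k) * fact (n - k - l)))"
proof (intro conjI impI)
  have b1: "binom (int n) (2 * int k) = n choose (2*k)" unfolding binom_def by (auto simp: nat_mult_distrib binomial_eq_0)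
  have b2: "binom (2 * int k) (int k) = (2*k) choose k" unfolding binom_def by (auto simp: nat_mult_distrib)
  have P2: "card {w \<in> G n. occ [0,0,1] w = k \<and> occ [0,1] w = l} = cf n n l k"
    unfolding cnt_cf[symmetric] cnt_def G_W by (metis (no_types, lifting) conj_commute)
  show "card {w \<in> G n. occ [0,0,1] w = k \<and> occ [0,1] w = l}
           = binom (int n) (2 * int k) * binom (2 * int k) (int k)
             * binom (int n - 2 * int k) (int l - int k)"
    unfolding P2 binomB cfB ..
  have U: "{w \<in> G n. occ [0,0,1] w = k} = (\<Union>l\<in>{..2*n}. {w \<in> W n n. occ [0,1] w = l \<and> occ [0,0,1] w = k})"
  proof -
    have "\<And>w. w \<in> W n n \<Longrightarrow> occ [0,1] w \<le> 2*n"
      using occ_le_length[of "[0,1]"] unfolding W_def by (metis (mono_tags, lifting) mem_Collect_eq mult_2 list.distinct(1))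
    then show ?thesis unfolding G_W by auto
  qed
  have "card {w \<in> G n. occ [0,0,1] w = k} = (\<Sum>l\<le>2*n. card {w \<in> W n n. occ [0,1] w = l \<and> occ [0,0,1] w = k})"
    unfolding U by (rule card_UN_disjoint) (auto intro: finite_subset[OF _ finite_W])
  also have "\<dots> = (\<Sum>l\<le>2*n. cf n n l k)" unfolding cnt_cf[symmetric] cnt_def ..
  also have "\<dots> = (n choose (2*k)) * ((2*k) choose k) * (\<Sum>l\<le>2*n. if k \<le> l then (n - 2*k) choose (l - k) else 0)"
    unfolding cfB by (simp add: sum_distrib_left)
  also have "\<dots> = (n choose (2*k)) * ((2*k) choose k) * 2 ^ (n - 2*k)"
  proof (cases "2*k \<le> n")
    case True
    then show ?thesis unfolding shiftsum using rowsum[of "n - 2*k" "2*n - k"] by simp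
  next
    case False then show ?thesis by simp
  qed
  finally show "card {w \<in> G n. occ [0,0,1] w = k}
           = binom (int n) (2 * int k) * binom (2 * int k) (int k) * 2 ^ (n - 2 * k)"
    unfolding b1 b2 .
next
  assume h: "k \<le> l \<and> l \<le> n - k"
  then have k2: "2*k \<le> n" by linarith
  have e: "n - 2*k - (l - k) = n - k - l" using h by linarith
  have lk: "l - k \<le> n - 2*k" using h by linarith
  have "real (binom (int n) (2 * int k) * binom (2 * int k) (int k)
               * binom (int n - 2 * int k) (int l - int k))
     = fact n / (fact (2*k) * fact (n - 2*k)) * (fact (2*k) / (fact k * fact (2*k - k)))
            * (fact (n - 2*k) / (fact (l - k) * fact (n - 2*k - (l - k))))"
    unfolding binomB using h k2 lk by (simp add: binomial_fact)
  also have "\<dots> = fact n / (fact k ^ 2 * fact (l - k) * fact (n - k - l))"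
    unfolding e by (simp add: field_simps mult_2 power2_eq_square)
  finally show "real (binom (int n) (2 * int k) * binom (2 * int k) (int k)
               * binom (int n - 2 * int k) (int l - int k))
           = fact n / (fact k ^ 2 * fact (l - k) * fact (n - k - l))" .
qed


end
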